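(* For the generalized one-way trading problem (GOT) with capacity $C$ and bounds $0<L\le U$, $\theta=U/L$, under Assumption A, the optimal competitive ratio (the smallest competitive ratio achievable by an online algorithm) is $1+\ln\theta$.
   Context: GOT: a single knapsack of capacity $C$; items $n=1,\dots,N$ arrive one at a time. Item $n$ has a size $D_n>0$ and a value function $g_n:[0,D_n]\to\mathbb{R}_{\ge0}$, revealed on arrival. The offline problem is $\max\sum_n g_n(y_n)$ subject to $\sum_n y_n\le C$, $0\le y_n\le D_n$. Assumption A: each $g_n$ is non-decreasing, differentiable and concave, $g_n(0)=0$, and $L\le g_n'\le U$, with $L,U,C$ known in advance. An online algorithm irrevocably chooses $y_n$ upon arrival of item $n$ using only items $1,\dots,n$ and $C,L,U$, keeping the constraints feasible. Its competitive ratio is $\sup_{\mathcal I}\mathrm{OPT}(\mathcal I)/\mathrm{ALG}(\mathcal I)$ over all instances satisfying Assumption A. *)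

theory Defs
  imports "HOL-Analysis.Analysis"
begin

text \<open>An item is a pair (D, g): size D and value function g (only its restriction to
  [0, D] is relevant). An instance is a finite list of items, in arrival order.\<close>

type_synonym item = "real \<times> (real \<Rightarrow> real)"

definition valid_item :: "real \<Rightarrow> real \<Rightarrow> item \<Rightarrow> bool" where
  "valid_item L U it \<longleftrightarrow>
     (let D = fst it; g = snd it in
        D > 0 \<and> g 0 = 0 \<and> mono_on {0..D} g \<and> concave_on {0..D} g \<and>
        (\<exists>g'. \<forall>x\<in>{0..D}. (g has_real_derivative g' x) (at x within {0..D})
                          \<and> L \<le> g' x \<and> g' x \<le> U))"

definition valid_instance :: "real \<Rightarrow> real \<Rightarrow> item list \<Rightarrow> bool" where
  "valid_instance L U I \<longleftrightarrow> (\<forall>it\<in>set I. valid_item L U it)"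

definition feasible :: "real \<Rightarrow> item list \<Rightarrow> (nat \<Rightarrow> real) \<Rightarrow> bool" where
  "feasible C I y \<longleftrightarrow>
     (\<forall>n<length I. 0 \<le> y n \<and> y n \<le> fst (I ! n)) \<and> (\<Sum>n<length I. y n) \<le> C"

definition value_of :: "item list \<Rightarrow> (nat \<Rightarrow> real) \<Rightarrow> real" where
  "value_of I y = (\<Sum>n<length I. snd (I ! n) (y n))"

definition OPT :: "real \<Rightarrow> item list \<Rightarrow> real" where
  "OPT C I = Sup {value_of I y | y. feasible C I y}"

text \<open>A deterministic online algorithm (for fixed known C, L, U) maps the history of
  items 1..n (including the current item n) to the decision y_n.\<close>
type_synonym online_alg = "item list \<Rightarrow> real"

definition alg_decisions :: "online_alg \<Rightarrow> item list \<Rightarrow> nat \<Rightarrow> real" where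
  "alg_decisions A I n = A (take (Suc n) I)"

definition ALG :: "online_alg \<Rightarrow> item list \<Rightarrow> real" where
  "ALG A I = value_of I (alg_decisions A I)"

definition feasible_alg :: "real \<Rightarrow> real \<Rightarrow> real \<Rightarrow> online_alg \<Rightarrow> bool" where
  "feasible_alg C L U A \<longleftrightarrow>
     (\<forall>I. valid_instance L U I \<longrightarrow> feasible C I (alg_decisions A I))"

text \<open>A is c-competitive: OPT(I) \<le> c * ALG(I) on every instance satisfying Assumption A,
  i.e. sup_I OPT(I)/ALG(I) \<le> c (with OPT/0 = \<infinity> when OPT > 0).\<close>
definition competitive :: "real \<Rightarrow> real \<Rightarrow> real \<Rightarrow> online_alg \<Rightarrow> real \<Rightarrow> bool" where
  "competitive C L U A c \<longleftrightarrow>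
     (\<forall>I. valid_instance L U I \<longrightarrow> OPT C I \<le> c * ALG A I)"

end

theory Submission
  imports Defs
begin


definition phi :: "real \<Rightarrow> real \<Rightarrow> real \<Rightarrow> real" where
  "phi k L w = L * exp (max w k / k - 1)"
definition Psi :: "real \<Rightarrow> real \<Rightarrow> real \<Rightarrow> real" where
  "Psi k L w = L * k * exp (max w k / k - 1) - L * k + L * min w k"

lemma Psi_low: "w \<le> k \<Longrightarrow> Psi k L w = L * w"
  by (simp add: Psi_def max_def min_def)
lemma Psi_high: "k \<le> w \<Longrightarrow> Psi k L w = k * phi k L w"
  by (simp add: Psi_def phi_def max_def min_def)
lemma phi_low: "w \<le> k \<Longrightarrow> k > 0 \<Longrightarrow> phi k L w = L"
  by (simp add: phi_def max_def)

lemma phi_mono: "L \<ge> 0 \<Longrightarrow> k > 0 \<Longrightarrow> a \<le> b \<Longrightarrow> phi k L a \<le> phi k L b"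
  unfolding phi_def by (intro mult_left_mono) (auto simp: divide_right_mono)

lemma phi_ge: "L \<ge> 0 \<Longrightarrow> k > 0 \<Longrightarrow> L \<le> phi k L w"
proof -
  assume a: "L \<ge> 0" "k > 0"
  have "1 \<le> exp (max w k / k - 1)" using a by (simp add: max_def field_simps)
  thus ?thesis using a unfolding phi_def by (simp add: mult_le_cancel_left1)
qed

lemma Psi_0: "k > 0 \<Longrightarrow> Psi k L 0 = 0"
  by (simp add: Psi_low)

lemma exp_aux1: "exp (x::real) - exp y \<le> exp x * (x - y)"
proof -
  have "1 + (y - x) \<le> exp (y - x)" by (rule exp_ge_add_one_self)
  hence "exp x * (1 + (y - x)) \<le> exp x * exp (y - x)" by simp
  also have "\<dots> = exp y" by (simp add: exp_diff)
  finally show ?thesis by (simp add: algebra_simps)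
qed

lemma exp_aux2: "exp (y::real) * (x - y) \<le> exp x - exp y"
proof -
  have "1 + (x - y) \<le> exp (x - y)" by (rule exp_ge_add_one_self)
  hence "exp y * (1 + (x - y)) \<le> exp y * exp (x - y)" by simp
  also have "\<dots> = exp x" by (simp add: exp_diff)
  finally show ?thesis by (simp add: algebra_simps)
qed

lemma Psi_high_diff_up:
  assumes "k > 0" "L \<ge> 0" "k \<le> a" "a \<le> b"
  shows "Psi k L b - Psi k L a \<le> phi k L b * (b - a)"
proof -
  have m: "max a k = a" "max b k = b" "min a k = k" "min b k = k" using assms by auto
  have "Psi k L b - Psi k L a = L * k * (exp (b/k - 1) - exp (a/k - 1))"
    using assms by (simp add: Psi_def m algebra_simps)
  also have "\<dots> \<le> L * k * (exp (b/k - 1) * ((b/k - 1) - (a/k - 1)))"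
    using assms exp_aux1[of "b/k - 1" "a/k - 1"] by (intro mult_left_mono) auto
  also have "\<dots> = phi k L b * (b - a)"
    using assms by (simp add: phi_def m field_simps)
  finally show ?thesis .
qed

lemma Psi_high_diff_lo:
  assumes "k > 0" "L \<ge> 0" "k \<le> a" "a \<le> b"
  shows "phi k L a * (b - a) \<le> Psi k L b - Psi k L a"
proof -
  have m: "max a k = a" "max b k = b" "min a k = k" "min b k = k" using assms by auto
  have "phi k L a * (b - a) = L * k * (exp (a/k - 1) * ((b/k - 1) - (a/k - 1)))"
    using assms by (simp add: phi_def max_def field_simps)
  also have "\<dots> \<le> L * k * (exp (b/k - 1) - exp (a/k - 1))"
    using assms exp_aux2[of "a/k - 1" "b/k - 1"] by (intro mult_left_mono) auto
  also have "\<dots> = Psi k L b - Psi k L a"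
    using assms by (simp add: Psi_def m algebra_simps)
  finally show ?thesis .
qed

lemma Psi_diff_up:
  assumes "k > 0" "L \<ge> 0" "a \<le> b"
  shows "Psi k L b - Psi k L a \<le> phi k L b * (b - a)"
proof (cases "b \<le> k")
  case True
  then show ?thesis using assms by (simp add: Psi_low phi_low algebra_simps)
next
  case False
  show ?thesis
  proof (cases "a \<le> k")
    case True
    have 1: "Psi k L b - Psi k L k \<le> phi k L b * (b - k)"
      using Psi_high_diff_up[of k L k b] assms False by auto
    have 2: "Psi k L k - Psi k L a = L * (k - a)" using True assms by (simp add: Psi_low algebra_simps)
    have 3: "L * (k - a) \<le> phi k L b * (k - a)"
      using phi_ge[OF assms(2,1)] True by (intro mult_right_mono) auto
    show ?thesis using 1 2 3 by (simp add: algebra_simps)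
  next
    case False
    then show ?thesis using Psi_high_diff_up[of k L a b] assms by auto
  qed
qed

lemma Psi_diff_lo:
  assumes "k > 0" "L \<ge> 0" "a \<le> b"
  shows "phi k L a * (b - a) \<le> Psi k L b - Psi k L a"
proof (cases "b \<le> k")
  case True
  then show ?thesis using assms by (simp add: Psi_low phi_low algebra_simps)
next
  case False
  show ?thesis
  proof (cases "a \<le> k")
    case True
    have 1: "phi k L k * (b - k) \<le> Psi k L b - Psi k L k"
      using Psi_high_diff_lo[of k L k b] assms False by auto
    have 2: "Psi k L k - Psi k L a = L * (k - a)" using True assms by (simp add: Psi_low algebra_simps)
    have 3: "phi k L a = L" "phi k L k = L" using True assms by (auto simp: phi_low)
    show ?thesis using 1 2 3 by (simp add: algebra_simps)
  next
    case False
    then show ?thesis using Psi_high_diff_lo[of k L a b] assms by auto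
  qed
qed

lemma Psi_cont: "k \<noteq> 0 \<Longrightarrow> continuous_on S (Psi k L)"
  unfolding Psi_def by (intro continuous_intros) auto
lemma phi_cont: "k \<noteq> 0 \<Longrightarrow> isCont (phi k L) x"
  unfolding phi_def by (intro continuous_intros)

lemma deriv_bounds:
  fixes g g' :: "real \<Rightarrow> real"
  assumes der: "\<forall>x\<in>{0..D}. (g has_real_derivative g' x) (at x within {0..D}) \<and> L \<le> g' x \<and> g' x \<le> U"
    and "0 \<le> a" "a \<le> b" "b \<le> D"
  shows "L * (b - a) \<le> g b - g a \<and> g b - g a \<le> U * (b - a)"
proof (cases "a = b")
  case True then show ?thesis by simp
next
  case False
  hence ab: "a < b" using assms by simp
  have cont: "continuous_on {a..b} g"
    by (rule continuous_on_subset[OF DERIV_continuous_on[of "{0..D}" g g']])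
       (use der assms in auto)
  have derivs: "\<And>x. a < x \<Longrightarrow> x < b \<Longrightarrow> (g has_derivative (\<lambda>h. g' x * h)) (at x)"
  proof -
    fix x assume x: "a < x" "x < b"
    hence "x \<in> interior {0..D}" using assms by auto
    hence "at x within {0..D} = at x" by (rule at_within_interior)
    moreover have "(g has_real_derivative g' x) (at x within {0..D})" using der x assms by auto
    ultimately show "(g has_derivative (\<lambda>h. g' x * h)) (at x)"
      by (simp add: has_field_derivative_def)
  qed
  obtain \<xi> where xi0: "a < \<xi>" "\<xi> < b" "g b - g a = (\<lambda>h. g' \<xi> * h) (b - a)"
    by (rule mvt[OF ab cont derivs])
  hence xi: "a < \<xi>" "\<xi> < b" "g b - g a = g' \<xi> * (b - a)" by auto
  have "L \<le> g' \<xi>" "g' \<xi> \<le> U" using der xi assms by auto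
  then show ?thesis using xi ab by (auto intro: mult_right_mono)
qed



definition Fo :: "real \<Rightarrow> real \<Rightarrow> real \<Rightarrow> (real \<Rightarrow> real) \<Rightarrow> real \<Rightarrow> real" where
  "Fo k L w g y = g y - Psi k L (w + y)"

definition goodpick :: "real \<Rightarrow> real \<Rightarrow> real \<Rightarrow> real \<Rightarrow> item \<Rightarrow> real \<Rightarrow> bool" where
  "goodpick k L C w it y \<longleftrightarrow>
     (let b = min (fst it) (C - w) in 0 \<le> y \<and> y \<le> b \<and>
       (\<forall>y'. 0 \<le> y' \<and> y' \<le> b \<longrightarrow> Fo k L w (snd it) y' \<le> Fo k L w (snd it) y) \<and>
       (\<forall>y'. 0 \<le> y' \<and> y' \<le> b \<and> Fo k L w (snd it) y' = Fo k L w (snd it) y \<longrightarrow> y' \<le> y))"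

definition pick :: "real \<Rightarrow> real \<Rightarrow> real \<Rightarrow> real \<Rightarrow> item \<Rightarrow> real" where
  "pick k L C w it = (SOME y. goodpick k L C w it y)"

lemma limit_right_bound:
  fixes f :: "real \<Rightarrow> real"
  assumes "isCont f 0" "t0 > 0" "\<And>t. 0 < t \<Longrightarrow> t < t0 \<Longrightarrow> f t \<le> A"
  shows "f 0 \<le> A"
proof (rule tendsto_upperbound[of f "f 0" "at_right 0" A])
  have "(f \<longlongrightarrow> f 0) (at 0)" using assms(1) by (simp add: isCont_def)
  thus "(f \<longlongrightarrow> f 0) (at_right 0)"
    by (rule filterlim_mono[OF _ order_refl at_le]) auto
  show "\<forall>\<^sub>F t in at_right 0. f t \<le> A"
    using eventually_at_right_real[OF assms(2)] by eventually_elim (use assms(3) in auto)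
  show "\<not> trivial_limit (at_right (0::real))" by simp
qed

lemma valid_itemE:
  assumes "valid_item L U (D, g)"
  obtains g' where "D > 0" "g 0 = 0" "mono_on {0..D} g" "concave_on {0..D} g"
    "\<forall>x\<in>{0..D}. (g has_real_derivative g' x) (at x within {0..D}) \<and> L \<le> g' x \<and> g' x \<le> U"
  using assms unfolding valid_item_def Let_def by auto

lemma pick_exists:
  assumes "valid_item L U (D, g)" "k \<noteq> 0" "0 \<le> w" "w \<le> C"
  shows "\<exists>y. goodpick k L C w (D, g) y"
proof -
  obtain g' where v: "D > 0" "g 0 = 0" "mono_on {0..D} g" "concave_on {0..D} g"
    "\<forall>x\<in>{0..D}. (g has_real_derivative g' x) (at x within {0..D}) \<and> L \<le> g' x \<and> g' x \<le> U"
    using valid_itemE[OF assms(1)] by metis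
  define b where "b = min D (C - w)"
  have b0: "0 \<le> b" "b \<le> D" using v assms by (auto simp: b_def)
  have gc: "continuous_on {0..D} g"
    by (rule DERIV_continuous_on[of _ _ g']) (use v in auto)
  have Fc: "continuous_on {0..b} (Fo k L w g)"
    unfolding Fo_def
    by (intro continuous_intros continuous_on_subset[OF gc]
              continuous_on_compose2[OF Psi_cont[OF assms(2)]]) (use b0 in auto)
  obtain y0 where y0: "y0 \<in> {0..b}" "\<forall>y\<in>{0..b}. Fo k L w g y \<le> Fo k L w g y0"
    using continuous_attains_sup[OF compact_Icc _ Fc] b0 by auto
  define M where "M = {y \<in> {0..b}. Fo k L w g y = Fo k L w g y0}"
  have "closed M" unfolding M_def
    by (rule continuous_closed_preimage_constant[OF Fc]) simp
  moreover have "bounded M" by (rule bounded_subset[of "{0..b}"]) (auto simp: M_def)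
  ultimately have "compact M" by (simp add: compact_eq_bounded_closed)
  moreover have "M \<noteq> {}" using y0 by (auto simp: M_def)
  ultimately obtain y where y: "y \<in> M" "\<forall>t\<in>M. t \<le> y" using compact_attains_sup by blast
  have "goodpick k L C w (D, g) y"
    unfolding goodpick_def Let_def fst_conv snd_conv b_def[symmetric]
    using y y0 by (auto simp: M_def)
  thus ?thesis ..
qed

lemma pick_good:
  assumes "valid_item L U it" "k \<noteq> 0" "0 \<le> w" "w \<le> C"
  shows "goodpick k L C w it (pick k L C w it)"
proof -
  obtain D g where "it = (D, g)" by (cases it)
  thus ?thesis using pick_exists[of L U D g k w C] assms unfolding pick_def
    by (auto intro: someI_ex)
qed



lemma core:
  assumes val: "valid_item L U (D, g)" and L0: "0 < L" and k0: "0 < k" and kC: "k \<le> C"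
    and phiC: "phi k L C = U" and w: "0 \<le> w" "w \<le> C"
    and gp: "goodpick k L C w (D, g) y"
  shows "0 \<le> y" "y \<le> D" "w + y \<le> C"
    "Psi k L (w + y) - Psi k L w \<le> g y"
    "\<And>z. 0 \<le> z \<Longrightarrow> z \<le> D \<Longrightarrow> g z \<le> g y + phi k L (w + y) * (z - y)"
    "w + y < k \<Longrightarrow> y = D"
proof -
  obtain g' where v: "D > 0" "g 0 = 0" "mono_on {0..D} g" "concave_on {0..D} g"
    and der: "\<forall>x\<in>{0..D}. (g has_real_derivative g' x) (at x within {0..D}) \<and> L \<le> g' x \<and> g' x \<le> U"
    using valid_itemE[OF val] by metis
  define b where "b = min D (C - w)"
  define F where "F = Fo k L w g"
  have gp': "0 \<le> y" "y \<le> b" "\<And>y'. 0 \<le> y' \<Longrightarrow> y' \<le> b \<Longrightarrow> F y' \<le> F y"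
     "\<And>y'. 0 \<le> y' \<Longrightarrow> y' \<le> b \<Longrightarrow> F y' = F y \<Longrightarrow> y' \<le> y"
    using gp unfolding goodpick_def Let_def b_def F_def by auto
  have b0: "0 \<le> b" "b \<le> D" "b \<le> C - w" using v w by (auto simp: b_def)
  show y0: "0 \<le> y" "y \<le> D" "w + y \<le> C" using gp' b0 by auto
  show "Psi k L (w + y) - Psi k L w \<le> g y"
    using gp'(3)[of 0] b0 v by (simp add: F_def Fo_def)
  show "w + y < k \<Longrightarrow> y = D"
  proof (rule ccontr)
    assume wy: "w + y < k" "y \<noteq> D"
    have "y < b"
    proof (rule ccontr)
      assume "\<not> y < b"
      hence "y = b" using gp' by auto
      hence "y = C - w" using wy y0 by (auto simp: b_def)
      thus False using wy kC by auto
    qed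
    define v where "v = min b (k - w)"
    have vy: "y < v" "0 \<le> v" "v \<le> b" "w + v \<le> k" using \<open>y < b\<close> wy gp' by (auto simp: v_def)
    have "L * (v - y) \<le> g v - g y"
      using deriv_bounds[OF der, of y v] vy gp' b0 by auto
    moreover have "Psi k L (w + v) = L * (w + v)" "Psi k L (w + y) = L * (w + y)"
      using vy wy by (auto simp: Psi_low)
    ultimately have "F y \<le> F v" by (simp add: F_def Fo_def algebra_simps)
    hence "F v = F y" using gp'(3)[of v] vy by auto
    hence "v \<le> y" using gp'(4)[of v] vy by auto
    thus False using vy by auto
  qed
  have phic: "isCont (\<lambda>t. phi k L (w + y + t * (z - y)) * c) x" for z c x
    unfolding phi_def by (intro continuous_intros) (use k0 in auto)
  have conc: "(1 - t) * g y + t * g z \<le> g ((1 - t) * y + t * z)"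
    if "0 \<le> t" "t \<le> 1" "0 \<le> z" "z \<le> D" for t z
    using concave_onD[OF v(4), of t y z] that y0 by auto
  show "g z \<le> g y + phi k L (w + y) * (z - y)" if z: "0 \<le> z" "z \<le> D" for z
  proof (cases "z \<le> y")
    case True
    show ?thesis
    proof (cases "z = y")
      case True then show ?thesis by simp
    next
      case False
      hence zy: "z < y" using True by simp
      have hh: "phi k L (w + y + t * (z - y)) * (y - z) \<le> g y - g z" if t: "0 < t" "t < 1" for t
      proof -
        define u where "u = (1 - t) * y + t * z"
        have ue: "u - z = (1 - t) * (y - z)" "y - u = t * (y - z)" by (simp_all add: u_def algebra_simps)
        have "0 \<le> (1 - t) * (y - z)" "0 \<le> t * (y - z)" using t zy by auto
        hence u: "z \<le> u" "u \<le> y" "u = y + t * (z - y)" using ue by (auto simp: algebra_simps)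
        have u2: "y - u = t * (y - z)" using u by (simp add: algebra_simps)
        have "F u \<le> F y" using gp'(3)[of u] u z gp' by auto
        hence 1: "Psi k L (w + y) - Psi k L (w + u) \<le> g y - g u" by (simp add: F_def Fo_def)
        have 2: "phi k L (w + u) * (y - u) \<le> Psi k L (w + y) - Psi k L (w + u)"
          using Psi_diff_lo[of k L "w + u" "w + y"] k0 L0 u by auto
        have 3: "g y - g u \<le> t * (g y - g z)"
          using conc[of t z] t z by (simp add: u_def algebra_simps)
        have "t * (phi k L (w + y + t * (z - y)) * (y - z)) \<le> t * (g y - g z)"
          using 1 2 3 u u2 by (simp add: algebra_simps)
        thus ?thesis using t by simp
      qed
      from limit_right_bound[of "\<lambda>t. phi k L (w + y + t * (z - y)) * (y - z)" 1 "g y - g z", OF phic]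
      have "phi k L (w + y) * (y - z) \<le> g y - g z" using hh by auto
      thus ?thesis by (simp add: algebra_simps)
    qed
  next
    case False
    hence zy: "y < z" by simp
    show ?thesis
    proof (cases "y < b")
      case True
      define z' where "z' = min z b"
      define t0 where "t0 = (z' - y) / (z - y)"
      have t00: "0 < t0" "t0 \<le> 1" using True zy by (auto simp: t0_def z'_def)
      have "phi k L (w + y + t * (z - y)) * (y - z) \<le> g y - g z" if t: "0 < t" "t < t0" for t
      proof -
        define u where "u = (1 - t) * y + t * z"
        have u: "u = y + t * (z - y)" by (simp add: u_def algebra_simps)
        have "t * (z - y) < z' - y" using t zy by (simp add: t0_def field_simps)
        hence ub: "y \<le> u" "u \<le> b" using u t zy by (auto simp: z'_def)
        have u2: "u - y = t * (z - y)" using u by simp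
        have "F u \<le> F y" using gp'(3)[of u] ub gp' by auto
        hence 1: "g u - g y \<le> Psi k L (w + u) - Psi k L (w + y)" by (simp add: F_def Fo_def)
        have 2: "Psi k L (w + u) - Psi k L (w + y) \<le> phi k L (w + u) * (u - y)"
          using Psi_diff_up[of k L "w + y" "w + u"] k0 L0 ub by auto
        have 3: "t * (g z - g y) \<le> g u - g y"
          using conc[of t z] t t00 z by (simp add: u_def algebra_simps)
        have "t * (g z - g y) \<le> t * (phi k L (w + y + t * (z - y)) * (z - y))"
          using 1 2 3 u u2 by (simp add: algebra_simps)
        hence "g z - g y \<le> phi k L (w + y + t * (z - y)) * (z - y)" using t by simp
        thus ?thesis by (simp add: algebra_simps)
      qed
      hence "phi k L (w + y) * (y - z) \<le> g y - g z"
        using limit_right_bound[of "\<lambda>t. phi k L (w + y + t * (z - y)) * (y - z)" t0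
             "g y - g z", OF phic] t00 by auto
      then show ?thesis by (simp add: algebra_simps)
    next
      case False
      hence "y = b" using gp' by auto
      hence yC: "y = C - w" using zy z by (auto simp: b_def)
      have "g z - g y \<le> U * (z - y)" using deriv_bounds[OF der, of y z] zy z y0 by auto
      moreover have "phi k L (w + y) = U" using yC phiC by simp
      ultimately show ?thesis by (simp add: algebra_simps)
    qed
  qed
qed



primrec Wr :: "real \<Rightarrow> real \<Rightarrow> real \<Rightarrow> item list \<Rightarrow> real" where
  "Wr k L C [] = 0"
| "Wr k L C (x # xs) = Wr k L C xs + pick k L C (Wr k L C xs) x"

definition Alg :: "real \<Rightarrow> real \<Rightarrow> real \<Rightarrow> online_alg" where
  "Alg k L C xs = (if xs = [] then 0 else pick k L C (Wr k L C (rev (butlast xs))) (last xs))"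

lemma Alg_dec:
  assumes "n < length I"
  shows "alg_decisions (Alg k L C) I n = pick k L C (Wr k L C (rev (take n I))) (I ! n)"
  using assms by (simp add: alg_decisions_def Alg_def take_Suc_conv_app_nth)

lemma Wr_Suc:
  assumes "n < length I"
  shows "Wr k L C (rev (take (Suc n) I)) = Wr k L C (rev (take n I)) + pick k L C (Wr k L C (rev (take n I))) (I ! n)"
  using assms by (simp add: take_Suc_conv_app_nth)

lemma upper:
  assumes C0: "C > 0" and L0: "0 < L" and LU: "L \<le> U"
    and kdef: "k = C / (1 + ln (U / L))"
    and val: "valid_instance L U I"
  shows "feasible C I (alg_decisions (Alg k L C) I)"
    "OPT C I \<le> (1 + ln (U / L)) * ALG (Alg k L C) I"
proof -
  define \<alpha> where "\<alpha> = 1 + ln (U / L)"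
  have a1: "\<alpha> \<ge> 1" using L0 LU by (simp add: \<alpha>_def)
  have k0: "k > 0" and kC: "k \<le> C" and ak: "\<alpha> * k = C"
    using a1 C0 by (auto simp: kdef \<alpha>_def[symmetric] field_simps)
  have phiC: "phi k L C = U"
  proof -
    have "max C k = C" using kC by simp
    moreover have "C / k - 1 = ln (U / L)" using ak k0 by (simp add: field_simps \<alpha>_def)
    ultimately show ?thesis using L0 LU by (simp add: phi_def)
  qed
  define N where "N = length I"
  define w where "w n = Wr k L C (rev (take n I))" for n
  define y where "y = alg_decisions (Alg k L C) I"
  have vi: "valid_item L U (fst (I ! n), snd (I ! n))" if "n < N" for n
    using val that by (simp add: valid_instance_def N_def)
  have gp: "goodpick k L C (w n) (fst (I ! n), snd (I ! n)) (y n)"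
    if "n < N" "0 \<le> w n" "w n \<le> C" for n
    using pick_good[OF vi[OF that(1)], of k "w n" C] that k0
    by (simp add: y_def w_def Alg_dec N_def)
  have wS: "w (Suc n) = w n + y n" if "n < N" for n
    using that by (simp add: w_def y_def Wr_Suc Alg_dec N_def)
  have inv: "0 \<le> w n \<and> w n \<le> C \<and> w n = (\<Sum>j<n. y j)" if "n \<le> N" for n
    using that
  proof (induction n)
    case 0 then show ?case using C0 by (simp add: w_def)
  next
    case (Suc n)
    hence n: "n < N" "0 \<le> w n" "w n \<le> C" "w n = (\<Sum>j<n. y j)" by auto
    note c = core[OF vi[OF n(1)] L0 k0 kC phiC n(2,3) gp[OF n(1-3)]]
    show ?case using c n wS[OF n(1)] by auto
  qed
  have cr: "0 \<le> y n \<and> y n \<le> fst (I ! n) \<and> w n + y n \<le> C \<and>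
       Psi k L (w n + y n) - Psi k L (w n) \<le> snd (I ! n) (y n) \<and>
       (\<forall>z. 0 \<le> z \<and> z \<le> fst (I ! n) \<longrightarrow> snd (I ! n) z \<le> snd (I ! n) (y n) + phi k L (w n + y n) * (z - y n)) \<and>
       (w n + y n < k \<longrightarrow> y n = fst (I ! n))" if "n < N" for n
  proof -
    have n: "0 \<le> w n" "w n \<le> C" using inv[of n] that by auto
    note c = core[OF vi[OF that] L0 k0 kC phiC n gp[OF that n]]
    show ?thesis using c by blast
  qed
  define W where "W = w N"
  have W: "0 \<le> W" "W \<le> C" "W = (\<Sum>j<N. y j)" using inv[of N] by (auto simp: W_def)
  have wmono: "w (Suc n) \<le> W" if "n < N" for n
  proof -
    have "w (Suc n) = (\<Sum>j<Suc n. y j)" using inv[of "Suc n"] that by auto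
    also have "\<dots> \<le> (\<Sum>j<N. y j)"
      by (rule sum_mono2) (use that cr in auto)
    finally show ?thesis using W by simp
  qed
  show feas: "feasible C I (alg_decisions (Alg k L C) I)"
    unfolding feasible_def y_def[symmetric] N_def[symmetric] using cr W by auto
  have ALG: "ALG (Alg k L C) I = (\<Sum>n<N. snd (I ! n) (y n))"
    by (simp add: ALG_def value_of_def y_def N_def)
  have tele: "(\<Sum>n<N. Psi k L (w (Suc n)) - Psi k L (w n)) = Psi k L W"
    using sum_lessThan_telescope[of "\<lambda>n. Psi k L (w n)" N] k0
    by (simp add: W_def w_def Psi_0)
  have ALGge: "Psi k L W \<le> ALG (Alg k L C) I"
    unfolding ALG tele[symmetric] by (rule sum_mono) (use cr wS in auto)
  have Psi_nn: "0 \<le> Psi k L W"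
  proof -
    have "phi k L 0 * (W - 0) \<le> Psi k L W - Psi k L 0" using Psi_diff_lo[of k L 0 W] k0 L0 W by auto
    moreover have "0 \<le> phi k L 0 * (W - 0)" using phi_ge[of L k 0] k0 L0 W by auto
    ultimately show ?thesis using k0 by (simp add: Psi_0)
  qed
  have ALG0: "0 \<le> ALG (Alg k L C) I" using ALGge Psi_nn by linarith
  have bound: "value_of I z \<le> \<alpha> * ALG (Alg k L C) I" if z: "feasible C I z" for z
  proof (cases "W < k")
    case True
    have "value_of I z \<le> ALG (Alg k L C) I"
      unfolding value_of_def ALG N_def[symmetric]
    proof (rule sum_mono)
      fix n assume n: "n \<in> {..<N}"
      have "w (Suc n) < k" using wmono[of n] n True by auto
      hence yD: "y n = fst (I ! n)" using cr[of n] n wS[of n] by auto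
      have zn: "0 \<le> z n" "z n \<le> fst (I ! n)" using z n by (auto simp: feasible_def N_def)
      obtain g' where "mono_on {0..fst (I ! n)} (snd (I ! n))"
        using valid_itemE[OF vi[of n]] n by auto
      thus "snd (I ! n) (z n) \<le> snd (I ! n) (y n)"
        using zn yD by (auto intro: mono_onD)
    qed
    also have "\<dots> \<le> \<alpha> * ALG (Alg k L C) I" using a1 ALG0 by (simp add: mult_le_cancel_right1)
    finally show ?thesis .
  next
    case False
    define lam where "lam = phi k L W"
    have lam0: "0 \<le> lam" using phi_ge[of L k W] L0 k0 by (simp add: lam_def)
    have zsum: "(\<Sum>n<N. z n) \<le> C" using z by (simp add: feasible_def N_def)
    have per: "snd (I ! n) (z n) \<le> snd (I ! n) (y n) - phi k L (w (Suc n)) * y n + lam * z n"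
      if n: "n < N" for n
    proof -
      have zn: "0 \<le> z n" "z n \<le> fst (I ! n)" using z n by (auto simp: feasible_def N_def)
      have "snd (I ! n) (z n) \<le> snd (I ! n) (y n) + phi k L (w (Suc n)) * (z n - y n)"
        using cr[of n] n zn wS[of n] by auto
      moreover have "phi k L (w (Suc n)) * z n \<le> lam * z n"
        unfolding lam_def by (intro mult_right_mono phi_mono) (use L0 k0 wmono[OF n] zn in auto)
      ultimately show ?thesis by (simp add: algebra_simps)
    qed
    have "value_of I z \<le> (\<Sum>n<N. snd (I ! n) (y n) - phi k L (w (Suc n)) * y n + lam * z n)"
      unfolding value_of_def N_def[symmetric] by (rule sum_mono) (use per in auto)
    also have "\<dots> = ALG (Alg k L C) I - (\<Sum>n<N. phi k L (w (Suc n)) * y n) + lam * (\<Sum>n<N. z n)"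
      by (simp add: ALG sum.distrib sum_subtractf sum_distrib_left)
    also have "\<dots> \<le> ALG (Alg k L C) I - Psi k L W + lam * C"
    proof -
      have "Psi k L W \<le> (\<Sum>n<N. phi k L (w (Suc n)) * y n)"
        unfolding tele[symmetric]
      proof (rule sum_mono)
        fix n assume n: "n \<in> {..<N}"
        have "0 \<le> y n" using cr[of n] n by auto
        thus "Psi k L (w (Suc n)) - Psi k L (w n) \<le> phi k L (w (Suc n)) * y n"
          using Psi_diff_up[of k L "w n" "w n + y n"] k0 L0 wS[of n] n by auto
      qed
      moreover have "lam * (\<Sum>n<N. z n) \<le> lam * C" using lam0 zsum by (rule mult_left_mono[rotated])
      ultimately show ?thesis by linarith
    qed
    also have "lam * C = \<alpha> * Psi k L W"
      using False ak by (simp add: lam_def Psi_high)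
    also have "ALG (Alg k L C) I - Psi k L W + \<alpha> * Psi k L W \<le> \<alpha> * ALG (Alg k L C) I"
    proof -
      have "(\<alpha> - 1) * Psi k L W \<le> (\<alpha> - 1) * ALG (Alg k L C) I"
        using a1 ALGge by (intro mult_left_mono) auto
      thus ?thesis by (simp add: algebra_simps)
    qed
    finally show ?thesis .
  qed
  have ne: "{value_of I y | y. feasible C I y} \<noteq> {}" using feas by auto
  show "OPT C I \<le> (1 + ln (U / L)) * ALG (Alg k L C) I"
    unfolding OPT_def \<alpha>_def[symmetric] by (rule cSup_least[OF ne]) (use bound in auto)
qed



lemma abel:
  fixes p x :: "nat \<Rightarrow> real"
  assumes "\<And>i. p i > 0"
  shows "(\<Sum>j<Suc m. x j) = (\<Sum>i<m. (1 / p i - 1 / p (Suc i)) * (\<Sum>j<Suc i. p j * x j))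
           + (\<Sum>j<Suc m. p j * x j) / p m"
proof (induction m)
  case 0 then show ?case using assms[of 0] by simp
next
  case (Suc m)
  have pm: "p m > 0" "p (Suc m) > 0" using assms by auto
  have "(\<Sum>i<Suc m. (1 / p i - 1 / p (Suc i)) * (\<Sum>j<Suc i. p j * x j))
           + (\<Sum>j<Suc (Suc m). p j * x j) / p (Suc m)
        = (\<Sum>i<m. (1 / p i - 1 / p (Suc i)) * (\<Sum>j<Suc i. p j * x j))
           + (\<Sum>j<Suc m. p j * x j) / p m + x (Suc m)"
    using pm by (simp add: field_simps)
  also have "\<dots> = (\<Sum>j<Suc (Suc m). x j)" using Suc by simp
  finally show ?case by simp
qed

lemma exp_neg_bound: "(t::real) \<ge> 0 \<Longrightarrow> t / (1 + t) \<le> 1 - exp (- t)"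
proof -
  assume t: "t \<ge> 0"
  have "1 + t \<le> exp t" by (rule exp_ge_add_one_self)
  hence "exp (- t) \<le> 1 / (1 + t)" using t by (simp add: exp_minus field_simps)
  moreover have "1 - 1 / (1 + t) = t / (1 + t)" using t by (simp add: field_simps)
  ultimately show ?thesis by linarith
qed

lemma lin_valid:
  assumes "C > 0" "L \<le> q" "q \<le> U" "0 \<le> L"
  shows "valid_item L U (C, \<lambda>v. q * v)"
proof -
  have "mono_on {0..C} (\<lambda>v. q * v)"
    using assms by (intro mono_onI) (auto intro!: mult_left_mono)
  moreover have "concave_on {0..C} (\<lambda>v. q * v)"
    unfolding concave_on_iff by (auto simp: algebra_simps)
  moreover have "\<forall>x\<in>{0..C}. ((\<lambda>v. q * v) has_real_derivative (\<lambda>_. q) x) (at x within {0..C}) \<and> L \<le> (\<lambda>_. q) x \<and> (\<lambda>_. q) x \<le> U"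
    using assms by (auto intro!: derivative_eq_intros)
  ultimately show ?thesis using assms unfolding valid_item_def Let_def fst_conv snd_conv
    by (intro conjI exI[of _ "\<lambda>_. q"]) auto
qed

lemma lower:
  assumes C0: "C > 0" and L0: "0 < L" and LU: "L \<le> U"
    and c: "c < 1 + ln (U / L)"
    and fa: "feasible_alg C L U A" and comp: "competitive C L U A c"
  shows False
proof -
  define a where "a = ln (U / L)"
  have a0: "a \<ge> 0" using L0 LU by (simp add: a_def)
  have expa: "L * exp a = U" using L0 LU by (simp add: a_def)
  obtain m :: nat where m0: "m > 0" and mbig: "c - 1 < a * m / (m + a)"
  proof (cases "c - 1 < 0")
    case True
    have "0 \<le> a * 1 / (1 + a)" using a0 by simp
    thus ?thesis using that[of 1] True by simp
  next
    case False
    have da: "a - (c - 1) > 0" using c by (simp add: a_def)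
    obtain n :: nat where n: "(c - 1) * a / (a - (c - 1)) < n" using reals_Archimedean2 by blast
    have "(c - 1) * a < n * (a - (c - 1))" using n da by (simp add: field_simps)
    hence "(c - 1) * a < Suc n * (a - (c - 1))" using da by (simp add: algebra_simps) 
    hence "(c - 1) * (Suc n + a) < a * Suc n" by (simp add: algebra_simps)
    hence "c - 1 < a * Suc n / (Suc n + a)" using a0 by (simp add: field_simps)
    thus ?thesis using that[of "Suc n"] by simp
  qed
  define p where "p j = L * exp (a * j / m)" for j :: nat
  have p0: "p j > 0" for j using L0 by (simp add: p_def)
  have pL: "L \<le> p j" for j using L0 a0 by (simp add: p_def)
  have pU: "p j \<le> U" if "j \<le> m" for j
  proof -
    have "a * j / m \<le> a" using that m0 a0 by (simp add: field_simps mult_left_mono)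
    hence "p j \<le> L * exp a" using L0 by (simp add: p_def)
    thus ?thesis using expa by simp
  qed
  have pratio: "p j / p (Suc j) = exp (- (a / m))" for j
    using L0 m0 by (simp add: p_def exp_diff[symmetric] field_simps)
  define item where "item j = (C, \<lambda>v. p j * v)" for j
  define I where "I = map item [0..<Suc m]"
  have lenI: "length I = Suc m" by (simp add: I_def)
  have Inth: "I ! j = item j" if "j < Suc m" for j
    using that by (simp add: I_def del: upt_Suc)
  have valI: "valid_instance L U (take (Suc k) I)" if "k \<le> m" for k
  proof -
    have "valid_item L U (I ! j)" if "j < Suc m" for j
      using lin_valid[OF C0 pL pU] L0 that Inth[OF that] by (simp add: item_def)
    hence "\<forall>it\<in>set I. valid_item L U it" by (metis in_set_conv_nth lenI)
    thus ?thesis by (auto simp: valid_instance_def dest: in_set_takeD)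
  qed
  define x where "x j = alg_decisions A I j" for j
  have feasI: "feasible C I x"
    using fa valI[of m] lenI unfolding feasible_alg_def x_def[abs_def] by auto
  have x0: "0 \<le> x j" if "j \<le> m" for j using feasI that lenI by (auto simp: feasible_def)
  have xsum: "(\<Sum>j<Suc m. x j) \<le> C" using feasI lenI by (simp add: feasible_def)
  define S where "S k = (\<Sum>j<Suc k. p j * x j)" for k
  have key: "p k * C \<le> c * S k" if k: "k \<le> m" for k
  proof -
    define J where "J = take (Suc k) I"
    have lenJ: "length J = Suc k" using k lenI by (simp add: J_def)
    have Jnth: "J ! j = item j" if "j < Suc k" for j using that k Inth by (simp add: J_def)
    have "ALG A J = S k"
    proof -
      have "alg_decisions A J j = x j" if "j < Suc k" for j
        using that by (simp add: alg_decisions_def x_def J_def min_def)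
      thus ?thesis
        by (simp add: ALG_def value_of_def lenJ S_def Jnth item_def)
    qed
    moreover have "p k * C \<le> OPT C J"
    proof -
      define z where "z j = (if j = k then C else 0)" for j :: nat
      have fz: "feasible C J z"
        using C0 lenJ Jnth by (auto simp: feasible_def z_def item_def)
      have vz: "value_of J z = p k * C"
        by (simp add: value_of_def lenJ Jnth item_def z_def if_distrib cong: if_cong)
      have bdd: "bdd_above {value_of J y | y. feasible C J y}"
      proof (rule bdd_aboveI)
        fix v assume "v \<in> {value_of J y | y. feasible C J y}"
        then obtain y where y: "v = value_of J y" "feasible C J y" by auto
        have "v = (\<Sum>j<Suc k. p j * y j)" using y by (simp add: value_of_def lenJ Jnth item_def)
        also have "\<dots> \<le> (\<Sum>j<Suc k. U * y j)"
          by (rule sum_mono) (use y(2) lenJ pU k in \<open>auto simp: feasible_def intro!: mult_right_mono\<close>)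
        also have "\<dots> \<le> U * C" using y(2) lenJ L0 LU by (simp add: feasible_def sum_distrib_left[symmetric])
        finally show "v \<le> U * C" .
      qed
      show ?thesis unfolding OPT_def using fz vz by (intro cSup_upper[OF _ bdd]) (metis (mono_tags, lifting) mem_Collect_eq)
    qed
    moreover have "OPT C J \<le> c * ALG A J"
      using comp valI[OF k] by (simp add: competitive_def J_def)
    ultimately show ?thesis by simp
  qed
  show False
  proof (cases "c \<le> 0")
    case True
    have "p 0 * C \<le> c * (p 0 * x 0)" using key[of 0] by (simp add: S_def)
    moreover have "c * (p 0 * x 0) \<le> 0" using True x0[of 0] p0[of 0] by (simp add: mult_nonpos_nonneg)
    moreover have "p 0 * C > 0" using p0[of 0] C0 by simp
    ultimately show False by linarith
  next
    case False
    hence cpos: "c > 0" by simp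
    have rat: "a * m / (m + a) \<le> (\<Sum>i<m. 1 - p i / p (Suc i))"
    proof -
      have "a / m / (1 + a / m) \<le> 1 - exp (- (a / m))" using a0 m0 by (intro exp_neg_bound) auto
      moreover have "a / m / (1 + a / m) = a / (m + a)" using m0 a0 by (simp add: field_simps)
      ultimately have "a / (m + a) \<le> 1 - exp (- (a / m))" by linarith
      hence "m * (a / (m + a)) \<le> m * (1 - exp (- (a / m)))" by (rule mult_left_mono) simp
      thus ?thesis by (simp add: pratio mult.commute)
    qed
    have "c * (\<Sum>j<Suc m. x j) = (\<Sum>i<m. (1 / p i - 1 / p (Suc i)) * (c * S i)) + c * S m / p m"
    proof -
      have ab: "(\<Sum>j<Suc m. x j) = (\<Sum>i<m. (1 / p i - 1 / p (Suc i)) * S i) + S m / p m"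
        using abel[of p x m] p0 unfolding S_def by blast
      show ?thesis unfolding ab distrib_left sum_distrib_left
        by (simp add: mult.left_commute)
    qed
    also have "\<dots> \<ge> (\<Sum>i<m. (1 / p i - 1 / p (Suc i)) * (p i * C)) + p m * C / p m"
    proof -
      have "(\<Sum>i<m. (1 / p i - 1 / p (Suc i)) * (p i * C)) \<le> (\<Sum>i<m. (1 / p i - 1 / p (Suc i)) * (c * S i))"
      proof (rule sum_mono)
        fix i assume i: "i \<in> {..<m}"
        have "p i \<le> p (Suc i)" using L0 a0 m0 by (simp add: p_def divide_right_mono mult_left_mono)
        hence "0 \<le> 1 / p i - 1 / p (Suc i)" using p0 by (simp add: frac_le)
        thus "(1 / p i - 1 / p (Suc i)) * (p i * C) \<le> (1 / p i - 1 / p (Suc i)) * (c * S i)"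
          using key[of i] i by (intro mult_left_mono) auto
      qed
      moreover have "p m * C / p m \<le> c * S m / p m" using key[of m] p0[of m] by (simp add: divide_right_mono pos_le_divide_eq mult.commute)
      ultimately show ?thesis by linarith
    qed
    finally have 1: "(\<Sum>i<m. (1 / p i - 1 / p (Suc i)) * (p i * C)) + p m * C / p m \<le> c * (\<Sum>j<Suc m. x j)" .
    have "(\<Sum>i<m. (1 / p i - 1 / p (Suc i)) * (p i * C)) + p m * C / p m = C * (1 + (\<Sum>i<m. 1 - p i / p (Suc i)))"
    proof -
      have e: "(1 / p i - 1 / p (Suc i)) * (p i * C) = C * (1 - p i / p (Suc i))" for i
        using p0[of i] p0[of "Suc i"] by (simp add: field_simps)
      have "p m * C / p m = C" using p0[of m] by simp
      thus ?thesis unfolding e by (simp add: sum_distrib_left distrib_left)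
    qed
    also have "\<dots> > C * c" using rat mbig C0 by (intro mult_strict_left_mono) auto
    finally have "C * c < c * (\<Sum>j<Suc m. x j)" using 1 by linarith
    moreover have "c * (\<Sum>j<Suc m. x j) \<le> c * C" using xsum cpos by (intro mult_left_mono) auto
    ultimately show False by (simp add: mult.commute)
  qed
qed


theorem theorem2:
  fixes C L U :: real
  assumes "C > 0" and "0 < L" and "L \<le> U"
  shows "(\<exists>A. feasible_alg C L U A \<and> competitive C L U A (1 + ln (U / L)))
       \<and> (\<forall>c < 1 + ln (U / L). \<not> (\<exists>A. feasible_alg C L U A \<and> competitive C L U A c))"
proof
  define k where "k = C / (1 + ln (U / L))"
  have "feasible_alg C L U (Alg k L C)"
    unfolding feasible_alg_def using upper(1)[OF assms k_def] by blast
  moreover have "competitive C L U (Alg k L C) (1 + ln (U / L))"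
    unfolding competitive_def using upper(2)[OF assms k_def] by blast
  ultimately show "\<exists>A. feasible_alg C L U A \<and> competitive C L U A (1 + ln (U / L))" by blast
  show "\<forall>c < 1 + ln (U / L). \<not> (\<exists>A. feasible_alg C L U A \<and> competitive C L U A c)"
    using lower[OF assms] by blast
qed

end
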